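(* Let $X=\{X(t):t\ge0\}$ be an $H$-self-similar process ($H>0$) with cadlag paths, let $0<T<\infty$, and assume the density $f(1,\cdot)$ of $X(1)$ is strictly positive. Let $X_1,X_2,\dots$ be i.i.d. copies of $X$ with cadlag paths on a complete probability space, and for $n\ge1$ let $\tau^n_\alpha(t)$ be the empirical quantile process built from $X_1,\dots,X_n$. Fix $\alpha^*\in(\frac12,1)$, let $A=[1-\alpha^*,\alpha^*]$, $A_{\mathbb Q}=A\cap\mathbb Q$, and $[0,T]_{\mathbb Q}=([0,T]\cap\mathbb Q)\cup\{T\}$. Then, for each $n\ge1$: with probability one, $t\mapsto\tau^n_\alpha(t)$ is right continuous on $[0,T)$ (for every $\alpha$); $$P\Big(\sup_{t\in[0,T],\alpha\in A}|\tau^n_\alpha(t)-\tau_\alpha(t)|=\sup_{t\in[0,T]_{\mathbb Q},\alpha\in A_{\mathbb Q}}|\tau^n_\alpha(t)-\tau_\alpha(t)|\Big)=1;$$ with probability one $\tau^n_\alpha(\cdot)$ has left limits at every $t\in(0,T]$; and if the paths of $X$ (and of the $X_j$) are continuous, then with probability one $\tau^n_\alpha(\cdot)$ is continuous on $[0,T]$. Moreover, for each $t\in[0,T]$ and $n\ge1$, with probability one $\alpha\mapsto\tau^n_\alpha(t)$ is left continuous and has right limits on $(0,1)$.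
   Context: $H$-self-similar: for all $c>0$, $\{X(ct)\}_{t\ge0}$ and $\{c^HX(t)\}_{t\ge0}$ have the same finite-dimensional distributions. Notation: $F(t,x)=P(X(t)\le x)$, $F_n(t,x)=\frac1n\sum_{i=1}^nI(X_i(t)\le x)$, $\tau_\alpha(t)=\inf\{x:F(t,x)\ge\alpha\}$, $\tau^n_\alpha(t)=\inf\{x:F_n(t,x)\ge\alpha\}$. *)

theory Defs
  imports "HOL-Probability.Probability"
begin

definition cadlag :: "(real \<Rightarrow> real) \<Rightarrow> bool" where
  "cadlag g \<longleftrightarrow> (\<forall>t\<ge>0. continuous (at_right t) g) \<and> (\<forall>t>0. \<exists>l. (g \<longlongrightarrow> l) (at_left t))"

definition self_similar :: "'a measure \<Rightarrow> real \<Rightarrow> (real \<Rightarrow> 'a \<Rightarrow> real) \<Rightarrow> bool" where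
  "self_similar N H X \<longleftrightarrow>
     (\<forall>c>0. \<forall>I. finite I \<and> I \<subseteq> {0..} \<longrightarrow>
        distr N (PiM I (\<lambda>_. borel)) (\<lambda>\<omega>. \<lambda>t\<in>I. X (c * t) \<omega>)
      = distr N (PiM I (\<lambda>_. borel)) (\<lambda>\<omega>. \<lambda>t\<in>I. c powr H * X t \<omega>))"

definition path_law :: "'a measure \<Rightarrow> (real \<Rightarrow> 'a \<Rightarrow> real) \<Rightarrow> (real \<Rightarrow> real) measure" where
  "path_law M X = distr M (PiM {0..} (\<lambda>_. borel)) (\<lambda>\<omega>. \<lambda>t\<in>{0..}. X t \<omega>)"

definition cdf :: "'a measure \<Rightarrow> (real \<Rightarrow> 'a \<Rightarrow> real) \<Rightarrow> real \<Rightarrow> real \<Rightarrow> real" where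
  "cdf N X t x = measure N {\<omega> \<in> space N. X t \<omega> \<le> x}"

definition quantile :: "'a measure \<Rightarrow> (real \<Rightarrow> 'a \<Rightarrow> real) \<Rightarrow> real \<Rightarrow> real \<Rightarrow> real" where
  "quantile N X \<alpha> t = Inf {x. \<alpha> \<le> cdf N X t x}"

definition emp_cdf :: "(nat \<Rightarrow> real \<Rightarrow> 'b \<Rightarrow> real) \<Rightarrow> nat \<Rightarrow> real \<Rightarrow> real \<Rightarrow> 'b \<Rightarrow> real" where
  "emp_cdf Xs n t x \<omega> = real (card {i \<in> {1..n}. Xs i t \<omega> \<le> x}) / real n"

definition emp_quantile :: "(nat \<Rightarrow> real \<Rightarrow> 'b \<Rightarrow> real) \<Rightarrow> nat \<Rightarrow> real \<Rightarrow> real \<Rightarrow> 'b \<Rightarrow> real" where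
  "emp_quantile Xs n \<alpha> t \<omega> = Inf {x. \<alpha> \<le> emp_cdf Xs n t x \<omega>}"

end

theory Submission
  imports Defs
begin


definition Qv :: "nat \<Rightarrow> real \<Rightarrow> (nat \<Rightarrow> real) \<Rightarrow> real" where
  "Qv n a v = Inf {x. a \<le> real (card {i \<in> {1..n}. v i \<le> x}) / real n}"

lemma emp_Qv: "emp_quantile Xs n a t \<omega> = Qv n a (\<lambda>i. Xs i t \<omega>)"
  by (simp add: emp_quantile_def emp_cdf_def Qv_def)

lemma Qv_ceil:
  assumes "n \<ge> 1"
  shows "Qv n a v = Qv n (of_int \<lceil>real n * a\<rceil> / real n) v"
proof -
  have "\<And>c::nat. (a \<le> real c / real n) \<longleftrightarrow> (of_int \<lceil>real n * a\<rceil> / real n \<le> real c / real n)"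
  proof -
    fix c :: nat
    have n: "real n > 0" using assms by simp
    have "(a \<le> real c / real n) \<longleftrightarrow> real n * a \<le> real c" using n by (simp add: field_simps)
    also have "\<dots> \<longleftrightarrow> \<lceil>real n * a\<rceil> \<le> int c" by (simp add: ceiling_le_iff)
    also have "\<dots> \<longleftrightarrow> (of_int \<lceil>real n * a\<rceil> \<le> real c)"
      by (metis of_int_le_iff of_int_of_nat_eq)
    also have "\<dots> \<longleftrightarrow> (of_int \<lceil>real n * a\<rceil> / real n \<le> real c / real n)"
      using n by (simp add: divide_le_cancel)
    finally show "(a \<le> real c / real n) \<longleftrightarrow> (of_int \<lceil>real n * a\<rceil> / real n \<le> real c / real n)" .
  qed
  then show ?thesis unfolding Qv_def by presburger
qed

lemma Qv_set:
  fixes v :: "nat \<Rightarrow> real"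
  assumes "n \<ge> 1" "0 < a" "a \<le> 1"
  shows "{x. a \<le> real (card {i \<in> {1..n}. v i \<le> x}) / real n} \<noteq> {}"
    and "\<And>x. x \<in> {x. a \<le> real (card {i \<in> {1..n}. v i \<le> x}) / real n} \<Longrightarrow> Min (v ` {1..n}) \<le> x"
proof -
  let ?m = "Max (v ` {1..n})"
  have "{i \<in> {1..n}. v i \<le> ?m} = {1..n}" by auto
  then have "real (card {i \<in> {1..n}. v i \<le> ?m}) / real n = 1" using assms by simp
  then have "?m \<in> {x. a \<le> real (card {i \<in> {1..n}. v i \<le> x}) / real n}" using assms by simp
  then show "{x. a \<le> real (card {i \<in> {1..n}. v i \<le> x}) / real n} \<noteq> {}" by blast
next
  fix x assume x: "x \<in> {x. a \<le> real (card {i \<in> {1..n}. v i \<le> x}) / real n}"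
  show "Min (v ` {1..n}) \<le> x"
  proof (rule ccontr)
    assume "\<not> ?thesis"
    have m: "\<And>i. i \<in> {1..n} \<Longrightarrow> Min (v ` {1..n}) \<le> v i" by (intro Min_le) auto
    have "{i \<in> {1..n}. v i \<le> x} = {}" using \<open>\<not> Min (v ` {1..n}) \<le> x\<close> by (fastforce dest: m)
    then have "real (card {i \<in> {1..n}. v i \<le> x}) / real n = 0" by (metis card.empty div_0 of_nat_0)
    moreover have "a \<le> real (card {i \<in> {1..n}. v i \<le> x}) / real n" using x by simp
    ultimately show False using assms by linarith
  qed
qed

lemma Qv_lip_half:
  assumes "n \<ge> 1" "0 < a" "a \<le> 1" "\<forall>i\<in>{1..n}. \<bar>v i - w i\<bar> \<le> e"
  shows "Qv n a v \<le> Qv n a w + e"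
proof -
  let ?S = "\<lambda>v::nat\<Rightarrow>real. {x::real. a \<le> real (card {i \<in> {1..n}. v i \<le> x}) / real n}"
  have Sv: "?S v \<noteq> {}" "bdd_below (?S v)"
    using Qv_set[OF assms(1-3), where v=v] by (auto simp: bdd_below_def)
  have Sw: "?S w \<noteq> {}" using Qv_set[OF assms(1-3), where v=w] by auto
  have "Qv n a v - e \<le> Qv n a w" unfolding Qv_def
  proof (rule cInf_greatest[OF Sw])
    fix x assume x: "x \<in> ?S w"
    have "card {i \<in> {1..n}. w i \<le> x} \<le> card {i \<in> {1..n}. v i \<le> x + e}"
      by (rule card_mono) (use assms(4) in force)+
    then have "real (card {i \<in> {1..n}. w i \<le> x}) / real n \<le> real (card {i \<in> {1..n}. v i \<le> x + e}) / real n"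
      by (intro divide_right_mono) simp_all
    then have "x + e \<in> ?S v" using x by simp
    then have "Inf (?S v) \<le> x + e" by (rule cInf_lower[OF _ Sv(2)])
    then show "Inf (?S v) - e \<le> x" by simp
  qed
  then show ?thesis by simp
qed

lemma Qv_lip:
  assumes "n \<ge> 1" "0 < a" "a \<le> 1" "\<forall>i\<in>{1..n}. \<bar>v i - w i\<bar> \<le> e"
  shows "\<bar>Qv n a v - Qv n a w\<bar> \<le> e"
  using Qv_lip_half[OF assms] Qv_lip_half[OF assms(1-3), of w v e] assms(4)
  by (simp add: abs_minus_commute abs_le_iff)

lemma Qv_tendsto:
  assumes "n \<ge> 1" "0 < a" "a \<le> 1" "\<forall>i\<in>{1..n}. ((\<lambda>s. g i s) \<longlongrightarrow> l i) F"
  shows "((\<lambda>s. Qv n a (\<lambda>i. g i s)) \<longlongrightarrow> Qv n a l) F"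
proof (rule tendstoI)
  fix e :: real assume e: "e > 0"
  have "\<forall>i\<in>{1..n}. eventually (\<lambda>s. dist (g i s) (l i) < e/2) F"
  proof
    fix i assume i: "i \<in> {1..n}"
    show "eventually (\<lambda>s. dist (g i s) (l i) < e/2) F"
      using tendstoD[OF assms(4)[rule_format, OF i], of "e/2"] e by simp
  qed
  then have "eventually (\<lambda>s. \<forall>i\<in>{1..n}. dist (g i s) (l i) < e/2) F"
    by (simp add: eventually_ball_finite)
  then show "eventually (\<lambda>s. dist (Qv n a (\<lambda>i. g i s)) (Qv n a l) < e) F"
  proof (rule eventually_mono)
    fix s assume "\<forall>i\<in>{1..n}. dist (g i s) (l i) < e/2"
    then have "\<forall>i\<in>{1..n}. \<bar>g i s - l i\<bar> \<le> e/2" by (auto simp: dist_real_def)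
    from Qv_lip[OF assms(1-3) this] e show "dist (Qv n a (\<lambda>i. g i s)) (Qv n a l) < e"
      by (simp add: dist_real_def)
  qed
qed



lemma ss_cdf:
  assumes N_prob: "prob_space N" and X_meas: "\<forall>t\<ge>0. X t \<in> borel_measurable N"
    and X_ss: "self_similar N H X" and c: "c > 0" and s: "s \<ge> 0"
  shows "Defs.cdf N X (c * s) x = Defs.cdf N X s (x / c powr H)"
proof -
  let ?P = "PiM {s} (\<lambda>_. borel :: real measure)"
  have eq: "distr N ?P (\<lambda>\<omega>. \<lambda>u\<in>{s}. X (c * u) \<omega>) = distr N ?P (\<lambda>\<omega>. \<lambda>u\<in>{s}. c powr H * X u \<omega>)"
    using X_ss c s unfolding self_similar_def by auto
  let ?B = "{g \<in> space ?P. g s \<le> x}"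
  have "(\<lambda>g. g s) \<in> borel_measurable ?P" by (rule measurable_component_singleton) simp
  then have "(\<lambda>g. g s) -` {..x} \<inter> space ?P \<in> sets ?P" by (rule measurable_sets) simp
  moreover have "(\<lambda>g. g s) -` {..x} \<inter> space ?P = ?B" by auto
  ultimately have B: "?B \<in> sets ?P" by simp
  have m1: "(\<lambda>\<omega>. \<lambda>u\<in>{s}. X (c * u) \<omega>) \<in> measurable N ?P"
  proof (rule measurable_restrict)
    fix i assume "i \<in> {s}"
    then have "c * i \<ge> 0" using c s by simp
    then show "X (c * i) \<in> borel_measurable N" using X_meas by blast
  qed
  have m2: "(\<lambda>\<omega>. \<lambda>u\<in>{s}. c powr H * X u \<omega>) \<in> measurable N ?P"
  proof (rule measurable_restrict)
    fix i assume "i \<in> {s}"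
    then have "X i \<in> borel_measurable N" using X_meas s by blast
    then show "(\<lambda>\<omega>. c powr H * X i \<omega>) \<in> borel_measurable N"
      by (intro borel_measurable_times measurable_const) simp_all
  qed
  have "Defs.cdf N X (c * s) x = measure (distr N ?P (\<lambda>\<omega>. \<lambda>u\<in>{s}. X (c * u) \<omega>)) ?B"
    unfolding Defs.cdf_def measure_distr[OF m1 B]
    by (rule arg_cong[where f="measure N"]) (auto simp: space_PiM)
  also have "\<dots> = measure (distr N ?P (\<lambda>\<omega>. \<lambda>u\<in>{s}. c powr H * X u \<omega>)) ?B" by (simp only: eq)
  also have "\<dots> = measure N {\<omega> \<in> space N. c powr H * X s \<omega> \<le> x}"
    unfolding measure_distr[OF m2 B]
    by (rule arg_cong[where f="measure N"]) (auto simp: space_PiM)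
  also have "\<dots> = Defs.cdf N X s (x / c powr H)"
    unfolding Defs.cdf_def using c by (simp add: pos_le_divide_eq mult.commute)
  finally show ?thesis .
qed

lemma cdf_props:
  assumes N_prob: "prob_space N" and Xt: "X t \<in> borel_measurable N"
  shows "mono (Defs.cdf N X t)" "(Defs.cdf N X t \<longlongrightarrow> 1) at_top" "(Defs.cdf N X t \<longlongrightarrow> 0) at_bot"
    "\<And>x. Defs.cdf N X t x \<le> 1"
proof -
  interpret prob_space N by (rule N_prob)
  let ?D = "distr N borel (X t)"
  have rd: "real_distribution ?D" using Xt by simp
  have eq: "Defs.cdf N X t = Distribution_Functions.cdf ?D"
  proof
    fix x
    show "Defs.cdf N X t x = Distribution_Functions.cdf ?D x"
      unfolding Defs.cdf_def cdf_def2 measure_distr[OF Xt, of "{..x}", simplified]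
      by (rule arg_cong[where f="measure N"]) auto
  qed
  show "mono (Defs.cdf N X t)" unfolding eq
    by (rule monoI) (rule finite_borel_measure.cdf_nondecreasing[OF real_distribution.finite_borel_measure_M[OF rd]])
  show "(Defs.cdf N X t \<longlongrightarrow> 1) at_top" unfolding eq by (rule real_distribution.cdf_lim_at_top_prob[OF rd])
  show "(Defs.cdf N X t \<longlongrightarrow> 0) at_bot" unfolding eq
    by (rule finite_borel_measure.cdf_lim_at_bot[OF real_distribution.finite_borel_measure_M[OF rd]])
  show "\<And>x. Defs.cdf N X t x \<le> 1" unfolding eq by (rule real_distribution.cdf_bounded_prob[OF rd])
qed

lemma Inf_basic:
  fixes F :: "real \<Rightarrow> real"
  assumes "mono F" "(F \<longlongrightarrow> 1) at_top" "(F \<longlongrightarrow> 0) at_bot" "0 < a" "a < 1"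
  shows "{x. a \<le> F x} \<noteq> {}" "bdd_below {x. a \<le> F x}"
proof -
  have "eventually (\<lambda>x. F x > a) at_top" by (rule order_tendstoD(1)[OF assms(2) assms(5)])
  then obtain N0 where N0: "\<forall>n\<ge>N0. F n > a" unfolding eventually_at_top_linorder by blast
  then have "F N0 > a" using order_refl by blast
  then obtain x where "F x > a" by blast
  then have "x \<in> {x. a \<le> F x}" by simp
  then show "{x. a \<le> F x} \<noteq> {}" by blast
  have "eventually (\<lambda>x. F x < a) at_bot" by (rule order_tendstoD(2)[OF assms(3) assms(4)])
  then obtain N1 where N1: "\<forall>n\<le>N1. F n < a" unfolding eventually_at_bot_linorder by blast
  then have b: "F N1 < a" using order_refl by blast
  have "N1 \<le> x" if "a \<le> F x" for x
  proof (rule ccontr)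
    assume "\<not> N1 \<le> x"
    then have "F x \<le> F N1" using monoD[OF assms(1), of x N1] by simp
    then show False using b that by simp
  qed
  then show "bdd_below {x. a \<le> F x}" by (auto simp: bdd_below_def)
qed

lemma Inf_cont:
  fixes F :: "real \<Rightarrow> real"
  assumes mono: "mono F" and lim: "(F \<longlongrightarrow> 1) at_top" "(F \<longlongrightarrow> 0) at_bot"
    and strict: "\<And>x y. x < y \<Longrightarrow> F x < F y" and a0: "0 < a0" "a0 < 1" and e: "e > 0"
  shows "\<exists>d>0. \<forall>a. \<bar>a - a0\<bar> < d \<longrightarrow> \<bar>Inf {x. a \<le> F x} - Inf {x. a0 \<le> F x}\<bar> \<le> e"
proof -
  let ?S = "\<lambda>a. {x. a \<le> F x}"
  define q where "q = Inf (?S a0)"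
  note ne = Inf_basic[OF mono lim a0]
  have F1: "F (q - e) < a0"
  proof (rule ccontr)
    assume "\<not> F (q - e) < a0"
    then have "q \<le> q - e" unfolding q_def by (intro cInf_lower ne(2)) auto
    then show False using e by simp
  qed
  have "Inf (?S a0) < q + e/2" using e q_def by simp
  then obtain x where x: "a0 \<le> F x" "x < q + e/2" using cInf_less_iff[OF ne] by auto
  have F2: "F (q + e) > a0" using strict[of x "q+e"] x e by simp
  define d where "d = min (a0 - F (q - e)) (F (q + e) - a0)"
  have d: "d > 0" using F1 F2 by (simp add: d_def)
  show ?thesis
  proof (intro exI[of _ d] conjI allI impI d)
    fix a assume a: "\<bar>a - a0\<bar> < d"
    have lo: "F (q - e) < a" and hi: "a < F (q + e)" using a by (auto simp: d_def)
    have inS: "q + e \<in> ?S a" using hi by simp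
    have gt: "q - e \<le> y" if "y \<in> ?S a" for y
    proof (rule ccontr)
      assume "\<not> q - e \<le> y"
      then have "F y \<le> F (q - e)" using monoD[OF mono, of y "q - e"] by simp
      then show False using that lo by simp
    qed
    have bdd: "bdd_below (?S a)" using gt by (auto simp: bdd_below_def)
    have "Inf (?S a) \<le> q + e" by (rule cInf_lower[OF inS bdd])
    moreover have "q - e \<le> Inf (?S a)" using inS gt by (intro cInf_greatest) auto
    ultimately show "\<bar>Inf (?S a) - Inf (?S a0)\<bar> \<le> e" unfolding q_def[symmetric] by linarith
  qed
qed



context
  fixes N :: "'a measure" and X :: "real \<Rightarrow> 'a \<Rightarrow> real" and H :: real and f :: "real \<Rightarrow> ennreal"
  assumes N_prob: "prob_space N" and H_pos: "H > 0" and X_meas: "\<forall>t\<ge>0. X t \<in> borel_measurable N"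
    and X_ss: "self_similar N H X" and X1_density: "distributed N lborel (X 1) f"
    and f_pos: "\<forall>x. f x > 0"
begin

lemma F1_strict:
  assumes xy: "x < y"
  shows "Defs.cdf N X 1 x < Defs.cdf N X 1 y"
proof -
  interpret prob_space N by (rule N_prob)
  have Xm[measurable]: "X 1 \<in> borel_measurable N" using X_meas by simp
  have fm[measurable]: "f \<in> borel_measurable lborel" and d: "distr N lborel (X 1) = density lborel f"
    and Xl: "X 1 \<in> measurable N lborel"
    using X1_density by (auto simp: distributed_def)
  have ed: "emeasure (density lborel f) {x<..y} = (\<integral>\<^sup>+z. f z * indicator {x<..y} z \<partial>lborel)"
    by (rule emeasure_density[OF fm]) simp
  have pos: "(\<integral>\<^sup>+z. f z * indicator {x<..y} z \<partial>lborel) \<noteq> 0"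
  proof
    assume "(\<integral>\<^sup>+z. f z * indicator {x<..y} z \<partial>lborel) = 0"
    then have "AE z in lborel. f z * indicator {x<..y} z = 0"
      by (subst nn_integral_0_iff_AE[symmetric]) simp_all
    then have "AE z in lborel. z \<notin> {x<..y}"
    proof (rule AE_mp)
      show "AE z in lborel. f z * indicator {x<..y} z = 0 \<longrightarrow> z \<notin> {x<..y}"
      proof (rule AE_I2)
        fix z
        show "f z * indicator {x<..y} z = 0 \<longrightarrow> z \<notin> {x<..y}"
          using f_pos[rule_format, of z] by (auto simp: indicator_def)
      qed
    qed
    moreover have e: "{z \<in> space lborel. \<not> z \<notin> {x<..y}} = {x<..y}" by auto
    have iff: "(AE z in lborel. z \<notin> {x<..y}) = (emeasure lborel {x<..y} = 0)"
      by (rule AE_iff_measurable[OF _ e]) simp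
    ultimately have "emeasure lborel {x<..y} = 0" using iff by blast
    then show False using xy by simp
  qed
  let ?A = "{\<omega> \<in> space N. x < X 1 \<omega> \<and> X 1 \<omega> \<le> y}"
  have "emeasure N ?A = emeasure (distr N lborel (X 1)) {x<..y}"
    by (subst emeasure_distr[OF Xl]) (auto intro!: arg_cong[where f="emeasure N"])
  also have "\<dots> \<noteq> 0" using pos ed d by simp
  finally have "emeasure N ?A \<noteq> 0" .
  then have "measure N ?A \<noteq> 0" using emeasure_eq_measure[of ?A] by auto
  then have mA: "measure N ?A > 0" using measure_nonneg[of N ?A] by linarith
  have un: "{\<omega> \<in> space N. X 1 \<omega> \<le> y} = {\<omega> \<in> space N. X 1 \<omega> \<le> x} \<union> ?A" using xy by auto
  have "measure N {\<omega> \<in> space N. X 1 \<omega> \<le> y} = measure N {\<omega> \<in> space N. X 1 \<omega> \<le> x} + measure N ?A"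
    unfolding un by (rule finite_measure_Union) auto
  then show ?thesis using mA by (simp add: Defs.cdf_def)
qed

lemma cdf_nonneg': "Defs.cdf N X t x \<ge> 0" by (simp add: Defs.cdf_def)

lemma tau_pos:
  assumes t: "t > 0" and a: "0 < a" "a < 1"
  shows "quantile N X a t = t powr H * quantile N X a 1"
proof -
  let ?F = "Defs.cdf N X 1"
  define p where "p = t powr H"
  have p: "p > 0" using t by (simp add: p_def)
  have Ft: "\<And>x. Defs.cdf N X t x = ?F (x / p)"
    using ss_cdf[OF N_prob X_meas X_ss t, of 1] by (simp add: p_def)
  note pr = cdf_props[OF N_prob, of X 1]
  have Xm: "X 1 \<in> borel_measurable N" using X_meas by simp
  note ib = Inf_basic[OF pr(1-3)[OF Xm] a]
  let ?S = "{x. a \<le> ?F x}"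
  have "Inf {x. a \<le> Defs.cdf N X t x} = p * Inf ?S"
  proof (rule cInf_eq_non_empty)
    obtain y where "y \<in> ?S" using ib(1) by blast
    then have "p * y \<in> {x. a \<le> Defs.cdf N X t x}" using p by (simp add: Ft)
    then show "{x. a \<le> Defs.cdf N X t x} \<noteq> {}" by blast
  next
    fix x assume "x \<in> {x. a \<le> Defs.cdf N X t x}"
    then have "x / p \<in> ?S" by (simp add: Ft)
    then have "Inf ?S \<le> x / p" by (rule cInf_lower[OF _ ib(2)])
    then show "p * Inf ?S \<le> x" using p by (simp add: le_divide_eq mult.commute)
  next
    fix z assume z: "\<And>x. x \<in> {x. a \<le> Defs.cdf N X t x} \<Longrightarrow> z \<le> x"
    have "z / p \<le> Inf ?S"
    proof (rule cInf_greatest[OF ib(1)])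
      fix y assume "y \<in> ?S"
      then have "p * y \<in> {x. a \<le> Defs.cdf N X t x}" using p by (simp add: Ft)
      then have "z \<le> p * y" by (rule z)
      then show "z / p \<le> y" using p by (simp add: divide_le_eq mult.commute)
    qed
    then show "z \<le> p * Inf ?S" using p by (simp add: divide_le_eq mult.commute)
  qed
  then show ?thesis by (simp add: quantile_def p_def)
qed

lemma F0_same:
  assumes "x * y > 0"
  shows "Defs.cdf N X 0 x = Defs.cdf N X 0 y"
proof -
  have xy: "x / y > 0" using assms by (simp add: zero_less_divide_iff zero_less_mult_iff)
  have nz: "x \<noteq> 0" "y \<noteq> 0" using assms by auto
  define c where "c = (x / y) powr (1 / H)"
  have c: "c > 0" using xy nz by (simp add: c_def)
  have "c powr H = (x / y) powr (1 / H * H)" by (simp add: c_def powr_powr del: powr_one')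
  also have "1 / H * H = 1" using H_pos by simp
  finally have cH: "c powr H = x / y" using powr_one[of "x/y"] xy by simp
  have "Defs.cdf N X (c * 0) x = Defs.cdf N X 0 (x / c powr H)"
    by (rule ss_cdf[OF N_prob X_meas X_ss c]) simp
  also have "x / c powr H = y"
  proof -
    have "x \<noteq> 0" "y \<noteq> 0" using assms by auto
    then show ?thesis by (simp add: cH)
  qed
  finally show ?thesis by simp
qed

lemma tau_zero:
  assumes a: "0 < a" "a < 1"
  shows "quantile N X a 0 = 0"
proof -
  let ?F = "Defs.cdf N X 0"
  have Xm: "X 0 \<in> borel_measurable N" using X_meas by simp
  note pr = cdf_props[OF N_prob, of X 0, OF Xm]
  have one: "?F x = 1" if x: "x > 0" for x
  proof (rule ccontr)
    assume "?F x \<noteq> 1"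
    then have "?F x < 1" using pr(4)[of x] by simp
    then have "eventually (\<lambda>z. ?F z > ?F x) at_top" by (rule order_tendstoD(1)[OF pr(2)])
    then obtain M0 where M0: "\<And>z. z \<ge> M0 \<Longrightarrow> ?F z > ?F x" unfolding eventually_at_top_linorder by blast
    have "?F (max M0 1) > ?F x" by (rule M0) simp
    moreover have "?F x = ?F (max M0 1)" by (rule F0_same) (use x in \<open>auto intro: mult_pos_pos\<close>)
    ultimately show False by simp
  qed
  have zero: "?F x = 0" if x: "x < 0" for x
  proof (rule ccontr)
    assume "?F x \<noteq> 0"
    then have "?F x > 0" using cdf_nonneg'[of 0 x] by simp
    then have "eventually (\<lambda>z. ?F z < ?F x) at_bot" by (rule order_tendstoD(2)[OF pr(3)])
    then obtain M0 where M0: "\<And>z. z \<le> M0 \<Longrightarrow> ?F z < ?F x" unfolding eventually_at_bot_linorder by blast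
    have "?F (min M0 (-1)) < ?F x" by (rule M0) simp
    moreover have "?F x = ?F (min M0 (-1))" by (rule F0_same) (use x in \<open>auto intro: mult_neg_neg\<close>)
    ultimately show False by simp
  qed
  have "Inf {x. a \<le> ?F x} = 0"
  proof (rule cInf_eq_non_empty)
    have "1 \<in> {x. a \<le> ?F x}" using one[of 1] a by simp
    then show "{x. a \<le> ?F x} \<noteq> {}" by blast
  next
    fix x assume "x \<in> {x. a \<le> ?F x}"
    then show "0 \<le> x" using zero[of x] a by force
  next
    fix z assume z: "\<And>x. x \<in> {x. a \<le> ?F x} \<Longrightarrow> z \<le> x"
    show "z \<le> 0"
    proof (rule ccontr)
      assume "\<not> z \<le> 0"
      then have "z / 2 \<in> {x. a \<le> ?F x}" using one[of "z/2"] a by simp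
      then have "z \<le> z / 2" by (rule z)
      then show False using \<open>\<not> z \<le> 0\<close> by simp
    qed
  qed
  then show ?thesis by (simp add: quantile_def)
qed

lemma tau_formula:
  assumes "t \<ge> 0" "0 < a" "a < 1"
  shows "quantile N X a t = t powr H * quantile N X a 1"
proof (cases "t = 0")
  case True
  then have "quantile N X a t = 0" using tau_zero[OF assms(2,3)] by (simp only:)
  moreover have "t powr H = 0" using True by simp
  ultimately show ?thesis by simp
next
  case False
  then have "t > 0" using assms(1) by simp
  then show ?thesis by (rule tau_pos[OF _ assms(2,3)])
qed

lemma q1_cont:
  assumes "0 < a0" "a0 < 1" "e > 0"
  shows "\<exists>d>0. \<forall>a. \<bar>a - a0\<bar> < d \<longrightarrow> \<bar>quantile N X a 1 - quantile N X a0 1\<bar> \<le> e"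
proof -
  have Xm: "X 1 \<in> borel_measurable N" using X_meas by simp
  note pr = cdf_props[OF N_prob, of X 1, OF Xm]
  show ?thesis unfolding quantile_def
    by (rule Inf_cont[OF pr(1-3) F1_strict assms])
qed

end



lemma alpha_choice:
  assumes n: "n \<ge> 1" and lohi: "lo < hi" "lo \<le> a0" "a0 \<le> hi" and d: "d > 0"
  shows "\<exists>a\<in>{lo..hi} \<inter> \<rat>. \<bar>a - a0\<bar> < d \<and> \<lceil>real n * a\<rceil> = \<lceil>real n * a0\<rceil>"
proof (cases "a0 \<in> \<rat>")
  case True then show ?thesis using lohi d by (intro bexI[of _ a0]) auto
next
  case False
  define k where "k = \<lceil>real n * a0\<rceil>"
  have nn: "real n > 0" using n by simp
  have ne: "real n * a0 \<noteq> of_int k"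
  proof
    assume "real n * a0 = of_int k"
    then have "a0 = of_int k / real n" using nn by (simp add: field_simps)
    then have "a0 \<in> \<rat>" by simp
    with False show False by simp
  qed
  have k1: "of_int k - 1 < real n * a0" "real n * a0 < of_int k"
    using ceiling_correct[of "real n * a0"] ne unfolding k_def[symmetric] by auto
  have key: "\<lceil>real n * a\<rceil> = k" if "of_int k - 1 < real n * a" "real n * a \<le> of_int k" for a
    using that by (simp add: ceiling_eq_iff)
  show ?thesis
  proof (cases "a0 < hi")
    case True
    define u where "u = min hi (min (of_int k / real n) (a0 + d))"
    have "a0 < of_int k / real n" using k1 nn by (simp add: field_simps)
    then have "a0 < u" using True d by (simp add: u_def)
    then obtain r where r: "r \<in> \<rat>" "a0 < r" "r < u" using Rats_dense_in_real by blast
    show ?thesis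
    proof (intro bexI[of _ r] conjI)
      show "\<bar>r - a0\<bar> < d" using r by (simp add: u_def)
      have "r < of_int k / real n" using r by (simp add: u_def)
      then have "real n * r \<le> of_int k" using nn by (simp add: field_simps)
      moreover have "real n * a0 < real n * r" using r nn by simp
      ultimately show "\<lceil>real n * r\<rceil> = \<lceil>real n * a0\<rceil>" using key k1 unfolding k_def[symmetric] by simp
      show "r \<in> {lo..hi} \<inter> \<rat>" using r lohi by (auto simp: u_def)
    qed
  next
    case False
    then have lo0: "lo < a0" using lohi by simp
    define l where "l = max lo (max ((of_int k - 1) / real n) (a0 - d))"
    have "(of_int k - 1) / real n < a0" using k1 nn by (simp add: field_simps)
    then have "l < a0" using lo0 d by (simp add: l_def)
    then obtain r where r: "r \<in> \<rat>" "l < r" "r < a0" using Rats_dense_in_real by blast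
    show ?thesis
    proof (intro bexI[of _ r] conjI)
      show "\<bar>r - a0\<bar> < d" using r by (simp add: l_def)
      have "(of_int k - 1) / real n < r" using r by (simp add: l_def)
      then have "of_int k - 1 < real n * r" using nn by (simp add: field_simps)
      moreover have "real n * r < real n * a0" using r nn by simp
      ultimately show "\<lceil>real n * r\<rceil> = \<lceil>real n * a0\<rceil>" using key k1 unfolding k_def[symmetric] by simp
      show "r \<in> {lo..hi} \<inter> \<rat>" using r lohi by (auto simp: l_def)
    qed
  qed
qed

lemma Qv_left:
  assumes n: "n \<ge> 1"
  shows "continuous (at_left a) (\<lambda>b. Qv n b v)"
proof -
  define k where "k = \<lceil>real n * a\<rceil>"
  have nn: "real n > 0" using n by simp
  have k1: "of_int k - 1 < real n * a" "real n * a \<le> of_int k"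
    using ceiling_correct[of "real n * a"] unfolding k_def[symmetric] by auto
  have "eventually (\<lambda>b. Qv n b v = Qv n a v) (at_left a)"
    unfolding eventually_at_left_field
  proof (intro exI[of _ "(of_int k - 1) / real n"] conjI allI impI)
    show "(of_int k - 1) / real n < a" using k1 nn by (simp add: field_simps)
    fix y assume y: "(of_int k - 1) / real n < y" "y < a"
    have "of_int k - 1 < real n * y" using y nn by (simp add: field_simps)
    moreover have "real n * y \<le> of_int k" using y k1 nn
      by (meson less_imp_le mult_le_cancel_left_pos order_trans)
    ultimately have "\<lceil>real n * y\<rceil> = k" by (simp add: ceiling_eq_iff)
    then show "Qv n y v = Qv n a v" using Qv_ceil[OF n, of y] Qv_ceil[OF n, of a] k_def by simp
  qed
  then show ?thesis unfolding continuous_within by (rule tendsto_eventually)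
qed

lemma Qv_right:
  assumes n: "n \<ge> 1"
  shows "\<exists>l. ((\<lambda>b. Qv n b v) \<longlongrightarrow> l) (at_right a)"
proof -
  define k where "k = \<lfloor>real n * a\<rfloor> + 1"
  have nn: "real n > 0" using n by simp
  have k1: "of_int k - 1 \<le> real n * a" "real n * a < of_int k"
    using floor_correct[of "real n * a"] unfolding k_def by auto
  have "eventually (\<lambda>b. Qv n b v = Qv n (of_int k / real n) v) (at_right a)"
    unfolding eventually_at_right_field
  proof (intro exI[of _ "of_int k / real n"] conjI allI impI)
    show "a < of_int k / real n" using k1 nn by (simp add: field_simps)
    fix y assume y: "a < y" "y < of_int k / real n"
    have "real n * y < of_int k" using y nn by (simp add: field_simps)
    moreover have "real n * a < real n * y" using y nn by simp
    ultimately have "\<lceil>real n * y\<rceil> = k" using k1 by (simp add: ceiling_eq_iff)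
    then show "Qv n y v = Qv n (of_int k / real n) v" using Qv_ceil[OF n, of y] by simp
  qed
  then show ?thesis by (blast intro: tendsto_eventually)
qed



lemma abs_dist_aux:
  fixes x y d :: real
  assumes "dist x y < d"
  shows "\<bar>y\<bar> \<le> \<bar>x\<bar> + d"
proof -
  have "\<bar>y\<bar> = \<bar>x + (y - x)\<bar>" by simp
  also have "\<dots> \<le> \<bar>x\<bar> + \<bar>y - x\<bar>" by (rule abs_triangle_ineq)
  also have "\<bar>y - x\<bar> < d" using assms by (simp add: dist_real_def abs_minus_commute)
  finally show ?thesis by simp
qed

theorem lemma3:
  fixes N :: "'a measure" and M :: "'b measure"
    and X :: "real \<Rightarrow> 'a \<Rightarrow> real" and Xs :: "nat \<Rightarrow> real \<Rightarrow> 'b \<Rightarrow> real"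
    and H T \<alpha>s :: real and f :: "real \<Rightarrow> ennreal" and A :: "real set"
  assumes N_prob: "prob_space N"
    and M_prob: "prob_space M"
    and M_complete: "complete_measure M"
    and H_pos: "H > 0"
    and X_meas: "\<forall>t\<ge>0. X t \<in> borel_measurable N"
    and X_ss: "self_similar N H X"
    and X_cadlag: "\<forall>\<omega>\<in>space N. cadlag (\<lambda>t. X t \<omega>)"
    and T_pos: "0 < T"
    and X1_density: "distributed N lborel (X 1) f"
    and f_pos: "\<forall>x. f x > 0"
    and Xs_meas: "\<forall>j\<ge>1. \<forall>t\<ge>0. Xs j t \<in> borel_measurable M"
    and Xs_cadlag: "\<forall>j\<ge>1. \<forall>\<omega>\<in>space M. cadlag (\<lambda>t. Xs j t \<omega>)"
    and Xs_law: "\<forall>j\<ge>1. path_law M (Xs j) = path_law N X"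
    and Xs_indep: "prob_space.indep_vars M (\<lambda>_. PiM {0..} (\<lambda>_. borel))
                     (\<lambda>j \<omega>. \<lambda>t\<in>{0..}. Xs j t \<omega>) {1..}"
    and \<alpha>s_gt: "1/2 < \<alpha>s" and \<alpha>s_lt: "\<alpha>s < 1"
    and A_def: "A = {1 - \<alpha>s..\<alpha>s}"
  shows "\<forall>n\<ge>1.
     (AE \<omega> in M. \<forall>\<alpha>\<in>{0<..<1}. \<forall>t\<in>{0..<T}.
         continuous (at_right t) (\<lambda>s. emp_quantile Xs n \<alpha> s \<omega>))
   \<and> (AE \<omega> in M.
         (SUP (t, \<alpha>)\<in>{0..T} \<times> A. ereal \<bar>emp_quantile Xs n \<alpha> t \<omega> - quantile N X \<alpha> t\<bar>)
       = (SUP (t, \<alpha>)\<in>(({0..T} \<inter> \<rat>) \<union> {T}) \<times> (A \<inter> \<rat>).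
            ereal \<bar>emp_quantile Xs n \<alpha> t \<omega> - quantile N X \<alpha> t\<bar>))
   \<and> (AE \<omega> in M. \<forall>\<alpha>\<in>{0<..<1}. \<forall>t\<in>{0<..T}.
         \<exists>l. ((\<lambda>s. emp_quantile Xs n \<alpha> s \<omega>) \<longlongrightarrow> l) (at_left t))
   \<and> ((\<forall>\<omega>\<in>space N. continuous_on {0..} (\<lambda>t. X t \<omega>))
       \<and> (\<forall>j\<ge>1. \<forall>\<omega>\<in>space M. continuous_on {0..} (\<lambda>t. Xs j t \<omega>))
       \<longrightarrow> (AE \<omega> in M. \<forall>\<alpha>\<in>{0<..<1}.
              continuous_on {0..T} (\<lambda>t. emp_quantile Xs n \<alpha> t \<omega>)))
   \<and> (\<forall>t\<in>{0..T}. AE \<omega> in M. \<forall>\<alpha>\<in>{0<..<1}.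
         continuous (at_left \<alpha>) (\<lambda>a. emp_quantile Xs n a t \<omega>)
       \<and> (\<exists>l. ((\<lambda>a. emp_quantile Xs n a t \<omega>) \<longlongrightarrow> l) (at_right \<alpha>)))"
proof -
  note tf = tau_formula[OF N_prob H_pos X_meas X_ss X1_density f_pos]
  note qc = q1_cont[OF N_prob H_pos X_meas X_ss X1_density f_pos]
  have A01: "\<forall>a\<in>A. 0 < a \<and> a < 1" using A_def \<alpha>s_gt \<alpha>s_lt by auto
  {
  fix n :: nat assume n: "n \<ge> 1"
  have cadr: "\<And>j \<omega> t. j \<ge> 1 \<Longrightarrow> \<omega> \<in> space M \<Longrightarrow> t \<ge> 0 \<Longrightarrow>
      ((\<lambda>s. Xs j s \<omega>) \<longlongrightarrow> Xs j t \<omega>) (at_right t)"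
    using Xs_cadlag unfolding cadlag_def continuous_within by blast
  have cadl: "\<And>j \<omega> t. j \<ge> 1 \<Longrightarrow> \<omega> \<in> space M \<Longrightarrow> t > 0 \<Longrightarrow>
      \<exists>l. ((\<lambda>s. Xs j s \<omega>) \<longlongrightarrow> l) (at_left t)"
    using Xs_cadlag unfolding cadlag_def by blast

  have P1: "AE \<omega> in M. \<forall>\<alpha>\<in>{0<..<1}. \<forall>t\<in>{0..<T}.
         continuous (at_right t) (\<lambda>s. emp_quantile Xs n \<alpha> s \<omega>)"
  proof (rule AE_I2, intro ballI)
    fix \<omega> \<alpha> t assume \<omega>: "\<omega> \<in> space M" and \<alpha>: "\<alpha> \<in> {0<..<1::real}" and t: "t \<in> {0..<T}"
    have "((\<lambda>s. Qv n \<alpha> (\<lambda>i. Xs i s \<omega>)) \<longlongrightarrow> Qv n \<alpha> (\<lambda>i. Xs i t \<omega>)) (at_right t)"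
      by (rule Qv_tendsto[where g="\<lambda>i s. Xs i s \<omega>"]) (use n \<alpha> t \<omega> cadr in auto)
    then show "continuous (at_right t) (\<lambda>s. emp_quantile Xs n \<alpha> s \<omega>)"
      unfolding emp_Qv continuous_within .
  qed

  have P3: "AE \<omega> in M. \<forall>\<alpha>\<in>{0<..<1}. \<forall>t\<in>{0<..T}.
         \<exists>l. ((\<lambda>s. emp_quantile Xs n \<alpha> s \<omega>) \<longlongrightarrow> l) (at_left t)"
  proof (rule AE_I2, intro ballI)
    fix \<omega> \<alpha> t assume \<omega>: "\<omega> \<in> space M" and \<alpha>: "\<alpha> \<in> {0<..<1::real}" and t: "t \<in> {0<..T}"
    have "\<forall>i\<in>{1..n}. \<exists>l. ((\<lambda>s. Xs i s \<omega>) \<longlongrightarrow> l) (at_left t)" using cadl \<omega> t by auto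
    from bchoice[OF this] obtain l where l: "\<forall>i\<in>{1..n}. ((\<lambda>s. Xs i s \<omega>) \<longlongrightarrow> l i) (at_left t)" by blast
    have "((\<lambda>s. Qv n \<alpha> (\<lambda>i. Xs i s \<omega>)) \<longlongrightarrow> Qv n \<alpha> l) (at_left t)"
      by (rule Qv_tendsto[where g="\<lambda>i s. Xs i s \<omega>"]) (use n \<alpha> l in auto)
    then show "\<exists>l. ((\<lambda>s. emp_quantile Xs n \<alpha> s \<omega>) \<longlongrightarrow> l) (at_left t)"
      unfolding emp_Qv by blast
  qed

  have P4: "(\<forall>\<omega>\<in>space N. continuous_on {0..} (\<lambda>t. X t \<omega>))
       \<and> (\<forall>j\<ge>1. \<forall>\<omega>\<in>space M. continuous_on {0..} (\<lambda>t. Xs j t \<omega>))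
       \<longrightarrow> (AE \<omega> in M. \<forall>\<alpha>\<in>{0<..<1}.
              continuous_on {0..T} (\<lambda>t. emp_quantile Xs n \<alpha> t \<omega>))"
  proof (intro impI AE_I2 ballI)
    assume c: "(\<forall>\<omega>\<in>space N. continuous_on {0..} (\<lambda>t. X t \<omega>))
       \<and> (\<forall>j\<ge>1. \<forall>\<omega>\<in>space M. continuous_on {0..} (\<lambda>t. Xs j t \<omega>))"
    fix \<omega> \<alpha> assume \<omega>: "\<omega> \<in> space M" and \<alpha>: "\<alpha> \<in> {0<..<1::real}"
    have cj: "continuous_on {0..T} (\<lambda>t. Xs j t \<omega>)" if j: "j \<ge> 1" for j
    proof -
      have "continuous_on {0..} (\<lambda>t. Xs j t \<omega>)" using c \<omega> j by auto
      then show ?thesis by (rule continuous_on_subset) auto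
    qed
    show "continuous_on {0..T} (\<lambda>t. emp_quantile Xs n \<alpha> t \<omega>)"
      unfolding continuous_on_def emp_Qv
    proof
      fix x assume x: "x \<in> {0..T}"
      show "((\<lambda>t. Qv n \<alpha> (\<lambda>i. Xs i t \<omega>)) \<longlongrightarrow> Qv n \<alpha> (\<lambda>i. Xs i x \<omega>)) (at x within {0..T})"
        by (rule Qv_tendsto[where g="\<lambda>i s. Xs i s \<omega>"])
          (use n \<alpha> x cj in \<open>auto simp: continuous_on_def\<close>)
    qed
  qed

  have P5: "\<forall>t\<in>{0..T}. AE \<omega> in M. \<forall>\<alpha>\<in>{0<..<1}.
         continuous (at_left \<alpha>) (\<lambda>a. emp_quantile Xs n a t \<omega>)
       \<and> (\<exists>l. ((\<lambda>a. emp_quantile Xs n a t \<omega>) \<longlongrightarrow> l) (at_right \<alpha>))"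
    unfolding emp_Qv using Qv_left[OF n] Qv_right[OF n] by auto

  have P2: "AE \<omega> in M.
         (SUP (t, \<alpha>)\<in>{0..T} \<times> A. ereal \<bar>emp_quantile Xs n \<alpha> t \<omega> - quantile N X \<alpha> t\<bar>)
       = (SUP (t, \<alpha>)\<in>(({0..T} \<inter> \<rat>) \<union> {T}) \<times> (A \<inter> \<rat>).
            ereal \<bar>emp_quantile Xs n \<alpha> t \<omega> - quantile N X \<alpha> t\<bar>)"
  proof (rule AE_I2)
    fix \<omega> assume \<omega>: "\<omega> \<in> space M"
    let ?Q = "\<lambda>a s. emp_quantile Xs n a s \<omega>"
    let ?q = "\<lambda>a. quantile N X a 1"
    let ?R = "(({0..T} \<inter> \<rat>) \<union> {T}) \<times> (A \<inter> \<rat>)"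
    let ?\<Phi> = "\<lambda>(t, \<alpha>). ereal \<bar>emp_quantile Xs n \<alpha> t \<omega> - quantile N X \<alpha> t\<bar>"
    have core: "\<exists>t' a'. t' \<in> ({0..T} \<inter> \<rat>) \<union> {T} \<and> a' \<in> A \<inter> \<rat> \<and>
        \<bar>?Q \<alpha>0 t0 - quantile N X \<alpha>0 t0\<bar> \<le> \<bar>?Q a' t' - quantile N X a' t'\<bar> + e"
      if t0: "t0 \<in> {0..T}" and \<alpha>0: "\<alpha>0 \<in> A" and e: "e > 0" for t0 \<alpha>0 e
    proof -
      have a01: "0 < \<alpha>0" "\<alpha>0 < 1" using A01 \<alpha>0 by auto
      define K where "K = T powr H + 1"
      have K: "K > 0" by (simp add: K_def add_nonneg_pos)
      have eK: "e / (2 * K) > 0" using e K by simp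
      obtain d1 where d1: "d1 > 0" "\<forall>a. \<bar>a - \<alpha>0\<bar> < d1 \<longrightarrow> \<bar>?q a - ?q \<alpha>0\<bar> \<le> e / (2 * K)"
        using qc[OF a01 eK] by blast
      obtain a' where a': "a' \<in> {1 - \<alpha>s..\<alpha>s} \<inter> \<rat>" "\<bar>a' - \<alpha>0\<bar> < d1" "\<lceil>real n * a'\<rceil> = \<lceil>real n * \<alpha>0\<rceil>"
        using alpha_choice[OF n, of "1 - \<alpha>s" \<alpha>s \<alpha>0 d1] \<alpha>0 A_def \<alpha>s_gt d1(1) by auto
      have a'A: "a' \<in> A \<inter> \<rat>" using a' A_def by simp
      have a'01: "0 < a'" "a' < 1" using A01 a'A by auto
      have Qeq: "?Q a' s = ?Q \<alpha>0 s" for s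
      proof -
        have "Qv n a' (\<lambda>i. Xs i s \<omega>) = Qv n (of_int \<lceil>real n * a'\<rceil> / real n) (\<lambda>i. Xs i s \<omega>)"
          by (rule Qv_ceil[OF n])
        also have "\<dots> = Qv n (of_int \<lceil>real n * \<alpha>0\<rceil> / real n) (\<lambda>i. Xs i s \<omega>)"
          by (simp only: a'(3))
        also have "\<dots> = Qv n \<alpha>0 (\<lambda>i. Xs i s \<omega>)"
          by (rule Qv_ceil[OF n, symmetric])
        finally show ?thesis unfolding emp_Qv .
      qed
      let ?g = "\<lambda>s. ?Q a' s - s powr H * ?q a'"
      have st1: "\<bar>?Q \<alpha>0 t0 - quantile N X \<alpha>0 t0\<bar> \<le> \<bar>?g t0\<bar> + e / 2"
      proof -
        have tq: "quantile N X \<alpha>0 t0 = t0 powr H * ?q \<alpha>0" by (rule tf) (use t0 a01 in auto)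
        have p0: "0 \<le> t0 powr H" "t0 powr H \<le> T powr H"
          using powr_mono2[of H t0 T] H_pos t0 by auto
        have dq: "\<bar>?q a' - ?q \<alpha>0\<bar> \<le> e / (2 * K)" using d1 a' by simp
        have "\<bar>t0 powr H * ?q a' - t0 powr H * ?q \<alpha>0\<bar> = t0 powr H * \<bar>?q a' - ?q \<alpha>0\<bar>"
          by (metis abs_mult abs_of_nonneg p0(1) right_diff_distrib)
        also have "\<dots> \<le> K * (e / (2 * K))"
          by (rule mult_mono) (use p0 dq K_def in auto)
        also have "\<dots> = e / 2" using K by simp
        finally have "\<bar>t0 powr H * ?q a' - t0 powr H * ?q \<alpha>0\<bar> \<le> e / 2" .
        then show ?thesis unfolding tq using Qeq[of t0] by linarith
      qed
      obtain t' where t': "t' \<in> ({0..T} \<inter> \<rat>) \<union> {T}" "\<bar>?g t0\<bar> \<le> \<bar>?g t'\<bar> + e / 2"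
      proof (cases "t0 = T")
        case True then show ?thesis using that[of T] e by auto
      next
        case False
        then have tlt: "t0 < T" using t0 by simp
        have ev0: "eventually (\<lambda>x. x \<ge> 0) (at_right t0)"
          unfolding eventually_at_right_field using t0 by (intro exI[of _ "t0 + 1"]) auto
        have pw: "((\<lambda>s. s powr H) \<longlongrightarrow> t0 powr H) (at_right t0)"
          by (rule tendsto_powr'[OF tendsto_ident_at tendsto_const]) (use H_pos ev0 in auto)
        have qt: "((\<lambda>s. ?Q a' s) \<longlongrightarrow> ?Q a' t0) (at_right t0)"
          unfolding emp_Qv
          by (rule Qv_tendsto[where g="\<lambda>i s. Xs i s \<omega>"]) (use n a'01 t0 \<omega> cadr in auto)
        have lim: "(?g \<longlongrightarrow> ?g t0) (at_right t0)"
          by (intro tendsto_diff qt tendsto_mult_right pw)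
        have "eventually (\<lambda>s. dist (?g s) (?g t0) < e / 2) (at_right t0)"
          using tendstoD[OF lim, of "e / 2"] e by simp
        then obtain b where b: "b > t0" "\<forall>y>t0. y < b \<longrightarrow> dist (?g y) (?g t0) < e / 2"
          unfolding eventually_at_right_field by blast
        obtain r where r: "r \<in> \<rat>" "t0 < r" "r < min b T"
          using Rats_dense_in_real[of t0 "min b T"] b tlt by auto
        show ?thesis
        proof (rule that[of r])
          show "r \<in> ({0..T} \<inter> \<rat>) \<union> {T}" using r t0 by auto
          have "dist (?g r) (?g t0) < e / 2" using b r by auto
          then show "\<bar>?g t0\<bar> \<le> \<bar>?g r\<bar> + e / 2" by (rule abs_dist_aux)
        qed
      qed
      have "t' \<ge> 0" using t'(1) T_pos by auto
      then have "quantile N X a' t' = t' powr H * ?q a'" by (rule tf) (use a'01 in auto)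
      then show ?thesis using st1 t'(2) t'(1) a'A
        by (intro exI[of _ t'] exI[of _ a']) auto
    qed
    show "(SUP (t, \<alpha>)\<in>{0..T} \<times> A. ereal \<bar>emp_quantile Xs n \<alpha> t \<omega> - quantile N X \<alpha> t\<bar>)
       = (SUP (t, \<alpha>)\<in>(({0..T} \<inter> \<rat>) \<union> {T}) \<times> (A \<inter> \<rat>).
            ereal \<bar>emp_quantile Xs n \<alpha> t \<omega> - quantile N X \<alpha> t\<bar>)"
    proof (rule antisym)
      show "(SUP p\<in>{0..T} \<times> A. ?\<Phi> p) \<le> (SUP p\<in>?R. ?\<Phi> p)"
      proof (rule SUP_least)
        fix p assume p: "p \<in> {0..T} \<times> A"
        then obtain t0 \<alpha>0 where p': "p = (t0, \<alpha>0)" "t0 \<in> {0..T}" "\<alpha>0 \<in> A" by auto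
        have "ereal \<bar>?Q \<alpha>0 t0 - quantile N X \<alpha>0 t0\<bar> \<le> (SUP p\<in>?R. ?\<Phi> p)"
        proof (rule ereal_le_epsilon2)
          fix e :: real assume e: "0 < e"
          obtain t' a' where ta: "t' \<in> ({0..T} \<inter> \<rat>) \<union> {T}" "a' \<in> A \<inter> \<rat>"
            "\<bar>?Q \<alpha>0 t0 - quantile N X \<alpha>0 t0\<bar> \<le> \<bar>?Q a' t' - quantile N X a' t'\<bar> + e"
            using core[OF p'(2,3) e] by blast
          have "ereal \<bar>?Q \<alpha>0 t0 - quantile N X \<alpha>0 t0\<bar> \<le> ereal \<bar>?Q a' t' - quantile N X a' t'\<bar> + ereal e"
            using ta(3) by simp
          also have "ereal \<bar>?Q a' t' - quantile N X a' t'\<bar> \<le> (SUP p\<in>?R. ?\<Phi> p)"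
            using SUP_upper[of "(t', a')" ?R ?\<Phi>] ta(1,2) by simp
          then have "ereal \<bar>?Q a' t' - quantile N X a' t'\<bar> + ereal e \<le> (SUP p\<in>?R. ?\<Phi> p) + ereal e"
            by (rule add_right_mono)
          finally show "ereal \<bar>?Q \<alpha>0 t0 - quantile N X \<alpha>0 t0\<bar> \<le> (SUP p\<in>?R. ?\<Phi> p) + ereal e" .
        qed
        then show "?\<Phi> p \<le> (SUP p\<in>?R. ?\<Phi> p)" using p' by simp
      qed
      show "(SUP p\<in>?R. ?\<Phi> p) \<le> (SUP p\<in>{0..T} \<times> A. ?\<Phi> p)"
        by (rule SUP_subset_mono) (use T_pos in auto)
    qed
  qed
  note R = P1 P2 P3 P4 P5
  }
  then show ?thesis by blast
qed


end
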